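(* Let $\boldsymbol c\in(0,1)$ and $|y|<\boldsymbol c$. With $z_{ij}$ as defined below, $$|z_{ij}''(y)|\le3\max_{l=1,\dots,d}\frac{\big(m_l^{(2)}(\tfrac1{1-\boldsymbol c})\big)^2}{\big(m_l^{(0)}(1-\boldsymbol c)\big)^4}\qquad\text{for all }i,j.$$
   Context: For each $i$, $Q_{i,n}=\Phi^{-1}(P[X_{i,t}\le n])$ where $X_{i,t}$ is $\mathbb N_0$-valued and $\Phi$ is the standard normal CDF (summands with $Q=\pm\infty$ are $0$). $z_{ij}(y)=\big(\sum_{n_0,n_1\ge0}\exp(-\tfrac12(Q_{i,n_0}^2+Q_{j,n_1}^2-2yQ_{i,n_0}Q_{j,n_1}))\big)^{-1}$ for $y\in(-1,1)$, and $m_i^{(k)}(u)=\frac1{\sqrt{2\pi}}\sum_{n\ge0}e^{-Q_{i,n}^2/(2u)}|Q_{i,n}|^k$, assumed finite for the arguments used, with $m_i^{(0)}(1-\boldsymbol c)>0$. *)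

theory Defs
  imports "HOL-Probability.Probability"
begin

definition Phi :: "real \<Rightarrow> real" where
  "Phi x = (LINT t|lborel. indicator {..x} t * std_normal_density t)"

definition Phi_inv :: "real \<Rightarrow> ereal" where
  "Phi_inv p = (if p \<le> 0 then -\<infinity> else if p \<ge> 1 then \<infinity> else ereal (THE x. Phi x = p))"

text \<open>X i is the (stationary) marginal distribution on N_0 of X_{i,t}.
  Q X i n = Phi^{-1}(P[X_{i,t} \<le> n]).\<close>
definition Q :: "(nat \<Rightarrow> nat pmf) \<Rightarrow> nat \<Rightarrow> nat \<Rightarrow> ereal" where
  "Q X i n = Phi_inv (measure_pmf.prob (X i) {..n})"

definition z_term :: "(nat \<Rightarrow> nat pmf) \<Rightarrow> nat \<Rightarrow> nat \<Rightarrow> real \<Rightarrow> nat \<times> nat \<Rightarrow> real" where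
  "z_term X i j y nn =
     (let a = Q X i (fst nn); b = Q X j (snd nn) in
      if \<bar>a\<bar> = \<infinity> \<or> \<bar>b\<bar> = \<infinity> then 0
      else exp (- (1/2) * ((real_of_ereal a)\<^sup>2 + (real_of_ereal b)\<^sup>2
                           - 2 * y * real_of_ereal a * real_of_ereal b)))"

definition z :: "(nat \<Rightarrow> nat pmf) \<Rightarrow> nat \<Rightarrow> nat \<Rightarrow> real \<Rightarrow> real" where
  "z X i j y = inverse (\<Sum>\<^sub>\<infinity>nn\<in>UNIV. z_term X i j y nn)"

definition m_term :: "(nat \<Rightarrow> nat pmf) \<Rightarrow> nat \<Rightarrow> nat \<Rightarrow> real \<Rightarrow> nat \<Rightarrow> real" where
  "m_term X i k u n =
     (let q = Q X i n in
      if \<bar>q\<bar> = \<infinity> then 0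
      else exp (- (real_of_ereal q)\<^sup>2 / (2 * u)) * \<bar>real_of_ereal q\<bar> ^ k)"

definition m :: "(nat \<Rightarrow> nat pmf) \<Rightarrow> nat \<Rightarrow> nat \<Rightarrow> real \<Rightarrow> real" where
  "m X i k u = 1 / sqrt (2 * pi) * (\<Sum>n. m_term X i k u n)"

end

theory Submission
  imports Defs
begin


lemma prod_series:
  fixes f g :: "nat \<Rightarrow> real"
  assumes f0: "\<And>n. f n \<ge> 0" and g0: "\<And>n. g n \<ge> 0"
    and sf: "summable f" and sg: "summable g"
  shows "(\<lambda>k. f (fst (prod_decode k)) * g (snd (prod_decode k))) sums (suminf f * suminf g)"
proof -
  define h where "h = (\<lambda>(a::nat,b::nat). f a * g b)"
  have hs: "h summable_on UNIV"
  proof (rule nonneg_bdd_above_summable_on)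
    show "\<And>x. x \<in> UNIV \<Longrightarrow> 0 \<le> h x" using f0 g0 by (auto simp: h_def)
    show "bdd_above (sum h ` {F. F \<subseteq> UNIV \<and> finite F})"
    proof (rule bdd_aboveI2)
      fix F :: "(nat\<times>nat) set" assume "F \<in> {F. F \<subseteq> UNIV \<and> finite F}"
      hence fin: "finite F" by auto
      have "sum h F \<le> sum h (fst ` F \<times> snd ` F)"
      proof (rule sum_mono2)
        show "F \<subseteq> fst ` F \<times> snd ` F" by force
      qed (use fin f0 g0 in \<open>auto simp: h_def intro!: mult_nonneg_nonneg\<close>)
      also have "\<dots> = sum f (fst ` F) * sum g (snd ` F)"
        by (simp add: h_def sum_product sum.cartesian_product)
      also have "\<dots> \<le> suminf f * suminf g"
      proof (rule mult_mono)
        show "sum f (fst ` F) \<le> suminf f" by (rule sum_le_suminf[OF sf]) (use f0 fin in auto)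
        show "sum g (snd ` F) \<le> suminf g" by (rule sum_le_suminf[OF sg]) (use g0 fin in auto)
        show "0 \<le> suminf f" by (rule suminf_nonneg[OF sf f0])
        show "0 \<le> sum g (snd ` F)" by (rule sum_nonneg) (use g0 in auto)
      qed
      finally show "sum h F \<le> suminf f * suminf g" .
    qed
  qed
  have fi: "infsum f UNIV = suminf f"
    using sums_nonneg_imp_has_sum[OF summable_sums[OF sf]] f0 infsumI by blast
  have gi: "infsum g UNIV = suminf g"
    using sums_nonneg_imp_has_sum[OF summable_sums[OF sg]] g0 infsumI by blast
  have hs': "(\<lambda>(x,y). f x * g y) summable_on (Sigma UNIV (\<lambda>_. UNIV))"
    using hs by (simp add: h_def)
  have "infsum h UNIV = infsum (\<lambda>x. infsum (\<lambda>y. f x * g y) UNIV) UNIV"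
    using infsum_Sigma'_banach[OF hs'] by (simp add: h_def)
  also have "\<dots> = infsum (\<lambda>x. f x * suminf g) UNIV"
    by (simp add: infsum_cmult_right' gi)
  also have "\<dots> = suminf f * suminf g"
    by (simp add: infsum_cmult_left' fi)
  finally have "(h has_sum (suminf f * suminf g)) UNIV"
    using hs by (metis has_sum_infsum)
  hence "((\<lambda>k. h (prod_decode k)) has_sum (suminf f * suminf g)) UNIV"
    using has_sum_reindex_bij_betw[OF bij_prod_decode] by blast
  hence "(\<lambda>k. h (prod_decode k)) sums (suminf f * suminf g)"
    by (rule has_sum_imp_sums)
  thus ?thesis by (simp add: h_def case_prod_beta)
qed

lemma series_CS:
  fixes p q r :: "nat \<Rightarrow> real"
  assumes "p sums P" "q sums Q'" "r sums R"
    and "\<And>n. (\<Sum>k<n. q k)^2 \<le> (\<Sum>k<n. p k) * (\<Sum>k<n. r k)"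
  shows "Q'^2 \<le> P * R"
proof (rule LIMSEQ_le)
  show "(\<lambda>n. (\<Sum>k<n. q k)^2) \<longlonglongrightarrow> Q'^2"
    using assms(2) unfolding sums_def by (intro tendsto_intros)
  show "(\<lambda>n. (\<Sum>k<n. p k) * (\<Sum>k<n. r k)) \<longlonglongrightarrow> P * R"
    using assms(1,3) unfolding sums_def by (intro tendsto_intros)
  show "\<exists>N. \<forall>n\<ge>N. (\<Sum>k<n. q k)\<^sup>2 \<le> (\<Sum>k<n. p k) * (\<Sum>k<n. r k)" using assms(4) by blast
qed

lemma finite_CS_exp:
  fixes W P :: "nat \<Rightarrow> real"
  assumes "\<And>k. W k \<ge> 0"
  shows "(\<Sum>k<n. W k * P k * exp (y * P k))^2 \<le> (\<Sum>k<n. W k * exp (y * P k)) * (\<Sum>k<n. W k * (P k)^2 * exp (y * P k))"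
proof -
  define u where "u k = sqrt (W k * exp (y * P k))" for k
  have uu: "(u k)^2 = W k * exp (y * P k)" for k
    using assms[of k] by (simp add: u_def)
  have e1: "W k * P k * exp (y * P k) = u k * (P k * u k)" for k
  proof -
    have "u k * (P k * u k) = P k * (u k)^2" by (simp add: power2_eq_square)
    also have "\<dots> = W k * P k * exp (y * P k)" unfolding uu by simp
    finally show ?thesis by (rule sym)
  qed
  have e2: "(P k * u k)^2 = W k * (P k)^2 * exp (y * P k)" for k
    by (simp add: power_mult_distrib uu)
  have "(\<Sum>k<n. u k * (P k * u k))^2 \<le> (\<Sum>k<n. (u k)^2) * (\<Sum>k<n. (P k * u k)^2)"
    by (rule Cauchy_Schwarz_ineq_sum)
  thus ?thesis by (simp only: e1 e2 uu)
qed



lemma series_derivs: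
  fixes W P M :: "nat \<Rightarrow> real" and c y :: real
  assumes W0: "\<And>k. W k \<ge> 0" and sM: "summable M"
   and bnd: "\<And>k x. \<bar>x\<bar> < c \<Longrightarrow> W k * exp (x * P k) * (1 + \<bar>P k\<bar> + (P k)^2) \<le> M k"
   and y: "\<bar>y\<bar> < c"
  shows "summable (\<lambda>k. W k * exp (y * P k))"
    "summable (\<lambda>k. W k * P k * exp (y * P k))"
    "summable (\<lambda>k. W k * (P k)^2 * exp (y * P k))"
    "((\<lambda>x. \<Sum>k. W k * exp (x * P k)) has_field_derivative (\<Sum>k. W k * P k * exp (y * P k))) (at y)"
    "((\<lambda>x. \<Sum>k. W k * P k * exp (x * P k)) has_field_derivative (\<Sum>k. W k * (P k)^2 * exp (y * P k))) (at y)"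
proof -
  define S where "S = {-c<..<c}"
  have yS: "y \<in> S" using y by (auto simp: S_def)
  have cS: "convex S" by (simp add: S_def)
  have iS: "interior S = S" by (simp add: S_def)
  have xS: "\<bar>x\<bar> < c" if "x \<in> S" for x using that by (auto simp: S_def)
  have nn: "0 \<le> W k * exp (x * P k)" for k x using W0[of k] by simp
  have b0: "norm (W k * exp (x * P k)) \<le> M k" if "x \<in> S" for k x
  proof -
    have "W k * exp (x * P k) * 1 \<le> W k * exp (x * P k) * (1 + \<bar>P k\<bar> + (P k)^2)"
      by (rule mult_left_mono) (use nn in auto)
    thus ?thesis using bnd[OF xS[OF that], of k] nn[of k x] by simp
  qed
  have b1: "norm (W k * P k * exp (x * P k)) \<le> M k" if "x \<in> S" for k x
  proof -
    have "norm (W k * P k * exp (x * P k)) = W k * exp (x * P k) * \<bar>P k\<bar>"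
      using nn[of k x] W0[of k] by (simp add: abs_mult)
    also have "\<dots> \<le> W k * exp (x * P k) * (1 + \<bar>P k\<bar> + (P k)^2)"
      by (rule mult_left_mono) (use nn in auto)
    finally show ?thesis using bnd[OF xS[OF that], of k] by simp
  qed
  have b2: "norm (W k * (P k)^2 * exp (x * P k)) \<le> M k" if "x \<in> S" for k x
  proof -
    have "norm (W k * (P k)^2 * exp (x * P k)) = W k * exp (x * P k) * (P k)^2"
      using nn[of k x] W0[of k] by (simp add: abs_mult)
    also have "\<dots> \<le> W k * exp (x * P k) * (1 + \<bar>P k\<bar> + (P k)^2)"
      by (rule mult_left_mono) (use nn in auto)
    finally show ?thesis using bnd[OF xS[OF that], of k] by simp
  qed
  have sm0: "summable (\<lambda>k. W k * exp (x * P k))" if "x \<in> S" for x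
    by (rule summable_comparison_test'[OF sM]) (use b0 that in auto)
  have sm1: "summable (\<lambda>k. W k * P k * exp (x * P k))" if "x \<in> S" for x
    by (rule summable_comparison_test'[OF sM]) (use b1 that in auto)
  have sm2: "summable (\<lambda>k. W k * (P k)^2 * exp (x * P k))" if "x \<in> S" for x
    by (rule summable_comparison_test'[OF sM]) (use b2 that in auto)
  show "summable (\<lambda>k. W k * exp (y * P k))" using sm0 yS .
  show "summable (\<lambda>k. W k * P k * exp (y * P k))" using sm1 yS .
  show "summable (\<lambda>k. W k * (P k)^2 * exp (y * P k))" using sm2 yS .
  have d1: "((\<lambda>x. W k * exp (x * P k)) has_field_derivative W k * P k * exp (x * P k)) (at x within S)" for k x
    by (auto intro!: derivative_eq_intros simp: algebra_simps)
  have d2: "((\<lambda>x. W k * P k * exp (x * P k)) has_field_derivative W k * (P k)^2 * exp (x * P k)) (at x within S)" for k x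
    by (auto intro!: derivative_eq_intros simp: algebra_simps power2_eq_square)
  have u1: "uniformly_convergent_on S (\<lambda>n x. \<Sum>i<n. W i * P i * exp (x * P i))"
    by (rule Weierstrass_m_test'[OF _ sM]) (use b1 in auto)
  have u2: "uniformly_convergent_on S (\<lambda>n x. \<Sum>i<n. W i * (P i)^2 * exp (x * P i))"
    by (rule Weierstrass_m_test'[OF _ sM]) (use b2 in auto)
  show "((\<lambda>x. \<Sum>k. W k * exp (x * P k)) has_field_derivative (\<Sum>k. W k * P k * exp (y * P k))) (at y)"
    using has_field_derivative_series'(2)[OF cS d1 u1 yS sm0[OF yS]] yS iS by simp
  show "((\<lambda>x. \<Sum>k. W k * P k * exp (x * P k)) has_field_derivative (\<Sum>k. W k * (P k)^2 * exp (y * P k))) (at y)"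
    using has_field_derivative_series'(2)[OF cS d2 u2 yS sm1[OF yS]] yS iS by simp
qed



lemma xab_bound:
  fixes a b x c :: real
  assumes "\<bar>x\<bar> < c"
  shows "\<bar>x * a * b\<bar> \<le> c * (a\<^sup>2 + b\<^sup>2) / 2"
proof -
  have "0 \<le> (\<bar>a\<bar> - \<bar>b\<bar>)\<^sup>2" by simp
  hence "2 * (\<bar>a\<bar> * \<bar>b\<bar>) \<le> \<bar>a\<bar>\<^sup>2 + \<bar>b\<bar>\<^sup>2" by (simp add: power2_diff algebra_simps)
  hence ab: "\<bar>a * b\<bar> \<le> (a\<^sup>2 + b\<^sup>2) / 2" by (simp add: abs_mult)
  have "\<bar>x * a * b\<bar> = \<bar>x\<bar> * \<bar>a * b\<bar>" by (simp add: abs_mult mult.assoc)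
  also have "\<dots> \<le> c * ((a\<^sup>2 + b\<^sup>2) / 2)"
    by (rule mult_mono) (use assms ab in auto)
  finally show ?thesis by simp
qed

lemma pw_upper:
  fixes a b x c :: real
  assumes "\<bar>x\<bar> < c" "c < 1"
  shows "exp (- (1/2) * (a\<^sup>2 + b\<^sup>2 - 2 * x * a * b))
     \<le> exp (- a\<^sup>2 / (2 * (1 / (1 - c)))) * exp (- b\<^sup>2 / (2 * (1 / (1 - c))))"
proof -
  have h: "\<bar>x * a * b\<bar> \<le> c * (a\<^sup>2 + b\<^sup>2) / 2" by (rule xab_bound[OF assms(1)])
  hence h': "x * a * b \<le> c * (a\<^sup>2 + b\<^sup>2) / 2" by (simp add: abs_le_iff)
  have e: "- a\<^sup>2 / (2 * (1 / (1 - c))) = - a\<^sup>2 * (1 - c) / 2" for a :: real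
    using assms by (simp add: field_simps)
  have l: "- (1/2) * (a\<^sup>2 + b\<^sup>2 - 2 * x * a * b) = x * a * b - (a\<^sup>2 + b\<^sup>2) / 2"
    by (simp add: algebra_simps)
  have r: "- a\<^sup>2 * (1 - c) / 2 + - b\<^sup>2 * (1 - c) / 2 = c * (a\<^sup>2 + b\<^sup>2) / 2 - (a\<^sup>2 + b\<^sup>2) / 2"
    by (simp add: field_simps)
  show ?thesis unfolding exp_add[symmetric] e exp_le_cancel_iff l r using h' by linarith
qed

lemma pw_lower:
  fixes a b x c :: real
  assumes "\<bar>x\<bar> < c" "c < 1" "0 < c"
  shows "exp (- a\<^sup>2 / (2 * (1 - c))) * exp (- b\<^sup>2 / (2 * (1 - c)))
     \<le> exp (- (1/2) * (a\<^sup>2 + b\<^sup>2 - 2 * x * a * b))"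
proof -
  have h: "\<bar>x * a * b\<bar> \<le> c * (a\<^sup>2 + b\<^sup>2) / 2" by (rule xab_bound[OF assms(1)])
  hence h': "- (c * (a\<^sup>2 + b\<^sup>2) / 2) \<le> x * a * b" by (simp add: abs_le_iff)
  define r where "r = c / (1 - c)"
  have r1: "1 / (1 - c) = 1 + r" using assms by (simp add: field_simps r_def)
  have cr: "c \<le> r" using assms by (simp add: r_def field_simps)
  have s0: "0 \<le> a\<^sup>2 + b\<^sup>2" by simp
  have m: "c * (a\<^sup>2 + b\<^sup>2) \<le> r * (a\<^sup>2 + b\<^sup>2)" by (rule mult_right_mono[OF cr s0])
  have e: "- a\<^sup>2 / (2 * (1 - c)) = - (1 / (1 - c)) * a\<^sup>2 / 2" for a :: real
    by simp
  have l: "- (1/2) * (a\<^sup>2 + b\<^sup>2 - 2 * x * a * b) = x * a * b - (a\<^sup>2 + b\<^sup>2) / 2"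
    by (simp add: algebra_simps)
  have rr: "- (1 + r) * a\<^sup>2 / 2 + - (1 + r) * b\<^sup>2 / 2 = - (a\<^sup>2 + b\<^sup>2) / 2 - r * (a\<^sup>2 + b\<^sup>2) / 2"
    by (simp add: field_simps)
  show ?thesis unfolding exp_add[symmetric] e r1 exp_le_cancel_iff l rr using h' m by linarith
qed

lemma pw_E:
  fixes a c :: real
  assumes "0 < c" "c < 1"
  defines "D \<equiv> exp (- a\<^sup>2 / (2 * (1 / (1 - c))))"
  defines "E \<equiv> D * \<bar>a\<bar>\<^sup>2 + exp (1 / (2 * (1 - c))) * (exp (- a\<^sup>2 / (2 * (1 - c))) * \<bar>a\<bar>^0)"
  shows "D \<le> E" "\<bar>a\<bar> * D \<le> 2 * E" "a\<^sup>2 * D \<le> E"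
proof -
  have D0: "0 \<le> D" by (simp add: D_def)
  have K0: "0 \<le> exp (1 / (2 * (1 - c))) * (exp (- a\<^sup>2 / (2 * (1 - c))) * \<bar>a\<bar>^0)" by simp
  show a2: "a\<^sup>2 * D \<le> E" using K0 by (simp add: E_def mult.commute)
  show dE: "D \<le> E"
  proof (cases "a\<^sup>2 \<ge> 1")
    case True
    hence "D \<le> a\<^sup>2 * D" using D0 by (simp add: mult_le_cancel_right1)
    thus ?thesis using a2 by linarith
  next
    case False
    have ca: "c * a\<^sup>2 \<le> a\<^sup>2" using mult_right_mono[of c 1 "a\<^sup>2"] assms by simp
    have "D \<le> 1" unfolding D_def using assms ca by (simp add: field_simps)
    also have "1 \<le> exp (1 / (2 * (1 - c))) * exp (- a\<^sup>2 / (2 * (1 - c)))"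
    proof -
      have "0 \<le> 1 / (2 * (1 - c)) + - a\<^sup>2 / (2 * (1 - c))"
        using False assms by (simp add: field_simps)
      thus ?thesis by (simp add: exp_add[symmetric])
    qed
    finally have "D \<le> exp (1 / (2 * (1 - c))) * exp (- a\<^sup>2 / (2 * (1 - c)))" .
    moreover have "0 \<le> D * \<bar>a\<bar>\<^sup>2" using D0 by simp
    ultimately show ?thesis unfolding E_def power_0 mult_1_right by linarith
  qed
  have "0 \<le> (\<bar>a\<bar> - 1)\<^sup>2" by simp
  hence "2 * \<bar>a\<bar> \<le> \<bar>a\<bar>\<^sup>2 + 1" by (simp add: power2_diff algebra_simps)
  hence "\<bar>a\<bar> \<le> 1 + a\<^sup>2" by simp
  hence "\<bar>a\<bar> * D \<le> (1 + a\<^sup>2) * D" using D0 by (rule mult_right_mono)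
  also have "\<dots> = D + a\<^sup>2 * D" by (simp add: algebra_simps)
  finally show "\<bar>a\<bar> * D \<le> 2 * E" using dE a2 by linarith
qed



lemma deriv2_inverse:
  fixes T T1 T2 g :: "real \<Rightarrow> real"
  assumes S: "open S" "y \<in> S" and Tp: "\<And>x. x\<in>S \<Longrightarrow> T x > 0"
   and d1: "\<And>x. x\<in>S \<Longrightarrow> (T has_field_derivative T1 x) (at x)"
   and d2: "\<And>x. x\<in>S \<Longrightarrow> (T1 has_field_derivative T2 x) (at x)"
   and g: "\<And>x. x\<in>S \<Longrightarrow> g x = inverse (T x)"
  shows "deriv (deriv g) y = - T2 y / (T y)\<^sup>2 + 2 * (T1 y)\<^sup>2 / (T y)^3"
proof -
  have dg: "deriv g x = - T1 x / (T x)\<^sup>2" if x: "x \<in> S" for x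
  proof -
    have "((\<lambda>x. inverse (T x)) has_field_derivative (- (T1 x * inverse (T x ^ Suc (Suc 0))))) (at x)"
      by (rule DERIV_inverse_fun[OF d1[OF x]]) (use Tp[OF x] in auto)
    hence "(g has_field_derivative (- (T1 x * inverse (T x ^ Suc (Suc 0))))) (at x)"
      by (rule has_field_derivative_transform_within_open[OF _ S(1) x]) (use g in auto)
    hence "deriv g x = - (T1 x * inverse (T x ^ Suc (Suc 0)))" by (rule DERIV_imp_deriv)
    thus ?thesis by (simp add: divide_inverse power2_eq_square)
  qed
  have "((\<lambda>x. - T1 x / (T x)\<^sup>2) has_field_derivative
      ((- T2 y) * (T y)\<^sup>2 - (- T1 y) * (of_nat 2 * (T1 y * T y ^ (2 - Suc 0)))) / ((T y)\<^sup>2 * (T y)\<^sup>2)) (at y)"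
    by (intro DERIV_divide DERIV_minus DERIV_power d1 d2 S(2)) (use Tp[OF S(2)] in auto)
  hence "(deriv g has_field_derivative
      ((- T2 y) * (T y)\<^sup>2 - (- T1 y) * (of_nat 2 * (T1 y * T y ^ (2 - Suc 0)))) / ((T y)\<^sup>2 * (T y)\<^sup>2)) (at y)"
    by (rule has_field_derivative_transform_within_open[OF _ S]) (use dg in auto)
  hence "deriv (deriv g) y = ((- T2 y) * (T y)\<^sup>2 - (- T1 y) * (of_nat 2 * (T1 y * T y ^ (2 - Suc 0)))) / ((T y)\<^sup>2 * (T y)\<^sup>2)"
    by (rule DERIV_imp_deriv)
  also have "\<dots> = - T2 y / (T y)\<^sup>2 + 2 * (T1 y)\<^sup>2 / (T y)^3"
    using Tp[OF S(2)] by (simp add: field_simps power2_eq_square power3_eq_cube)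
  finally show ?thesis .
qed



lemma pw_combine:
  fixes w a b Da Db Ea Eb :: real
  assumes "0 \<le> w" "w \<le> Da * Db" "0 \<le> Da" "0 \<le> Db"
    "Da \<le> Ea" "\<bar>a\<bar> * Da \<le> 2 * Ea" "a\<^sup>2 * Da \<le> Ea"
    "Db \<le> Eb" "\<bar>b\<bar> * Db \<le> 2 * Eb" "b\<^sup>2 * Db \<le> Eb"
  shows "w * (1 + \<bar>a * b\<bar> + (a * b)\<^sup>2) \<le> 6 * Ea * Eb"
proof -
  have p: "0 \<le> 1 + \<bar>a * b\<bar> + (a * b)\<^sup>2" by simp
  have "w * (1 + \<bar>a * b\<bar> + (a * b)\<^sup>2) \<le> Da * Db * (1 + \<bar>a * b\<bar> + (a * b)\<^sup>2)"
    by (rule mult_right_mono[OF assms(2) p])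
  also have "\<dots> = Da * Db + (\<bar>a\<bar> * Da) * (\<bar>b\<bar> * Db) + (a\<^sup>2 * Da) * (b\<^sup>2 * Db)"
    by (simp add: algebra_simps abs_mult power_mult_distrib)
  also have "\<dots> \<le> Ea * Eb + (2 * Ea) * (2 * Eb) + Ea * Eb"
  proof -
    have "Da * Db \<le> Ea * Eb" by (rule mult_mono) (use assms in auto)
    moreover have "(\<bar>a\<bar> * Da) * (\<bar>b\<bar> * Db) \<le> (2 * Ea) * (2 * Eb)"
      by (rule mult_mono) (use assms in auto)
    moreover have "(a\<^sup>2 * Da) * (b\<^sup>2 * Db) \<le> Ea * Eb"
      by (rule mult_mono) (use assms in auto)
    ultimately show ?thesis by linarith
  qed
  finally show ?thesis by simp
qed

lemma final_arith:
  fixes SAi SAj SCi SCj R s :: real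
  assumes "0 \<le> SAi" "0 \<le> SAj" "0 < SCi" "0 < SCj" "s = sqrt (2 * pi)"
    and "(1 / s * SAi)\<^sup>2 / (1 / s * SCi) ^ 4 \<le> R"
    and "(1 / s * SAj)\<^sup>2 / (1 / s * SCj) ^ 4 \<le> R"
  shows "3 * (SAi * SAj / (SCi * SCj)\<^sup>2) \<le> 3 * R"
proof -
  define xi where "xi = SAi / SCi\<^sup>2"
  define xj where "xj = SAj / SCj\<^sup>2"
  have s0: "s > 0" using assms(5) by (simp add: pi_gt_zero)
  have s2: "s\<^sup>2 = 2 * pi" using assms(5) by (simp add: pi_gt_zero less_imp_le)
  have s1: "1 \<le> s\<^sup>2" using s2 pi_gt3 by linarith
  have ri: "(1 / s * SAi)\<^sup>2 / (1 / s * SCi) ^ 4 = s\<^sup>2 * xi\<^sup>2"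
    using s0 assms(3) by (simp add: xi_def field_simps power2_eq_square power4_eq_xxxx)
  have rj: "(1 / s * SAj)\<^sup>2 / (1 / s * SCj) ^ 4 = s\<^sup>2 * xj\<^sup>2"
    using s0 assms(4) by (simp add: xj_def field_simps power2_eq_square power4_eq_xxxx)
  have "xi\<^sup>2 \<le> s\<^sup>2 * xi\<^sup>2" using s1 by (simp add: mult_le_cancel_right1)
  hence xi2: "xi\<^sup>2 \<le> R" using ri assms(6) by linarith
  have "xj\<^sup>2 \<le> s\<^sup>2 * xj\<^sup>2" using s1 by (simp add: mult_le_cancel_right1)
  hence xj2: "xj\<^sup>2 \<le> R" using rj assms(7) by linarith
  have "0 \<le> (xi - xj)\<^sup>2" by simp
  hence "2 * (xi * xj) \<le> xi\<^sup>2 + xj\<^sup>2" by (simp add: power2_diff algebra_simps)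
  hence "xi * xj \<le> R" using xi2 xj2 by linarith
  moreover have "SAi * SAj / (SCi * SCj)\<^sup>2 = xi * xj"
    by (simp add: xi_def xj_def power_mult_distrib)
  ultimately show ?thesis by simp
qed



lemma m_term_eq:
  "m_term X l k u n = (if \<bar>Q X l n\<bar> = \<infinity> then 0
     else exp (- (real_of_ereal (Q X l n))\<^sup>2 / (2 * u)) * \<bar>real_of_ereal (Q X l n)\<bar> ^ k)"
  by (simp add: m_term_def Let_def)

lemma m_term_nonneg: "0 \<le> m_term X l k u n"
proof (cases "\<bar>Q X l n\<bar> = \<infinity>")
  case True then show ?thesis unfolding m_term_eq by simp
next
  case False
  have nn: "0 \<le> exp (- r\<^sup>2 / (2 * u)) * \<bar>r\<bar> ^ k" for r :: real by simp
  show ?thesis unfolding m_term_eq by (subst if_not_P[OF False]) (rule nn)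
qed

lemma roe_abs_sq: "(real_of_ereal \<bar>q\<bar>)\<^sup>2 = (real_of_ereal q)\<^sup>2"
  by (cases q) auto

theorem mainTheorem11:
  fixes X :: "nat \<Rightarrow> nat pmf" and d i j :: nat and c y :: real
  assumes "0 < c" and "c < 1" and "\<bar>y\<bar> < c"
    and "i \<in> {1..d}" and "j \<in> {1..d}"
    and "\<forall>l\<in>{1..d}. summable (m_term X l 2 (1 / (1 - c)))"
    and "\<forall>l\<in>{1..d}. summable (m_term X l 0 (1 - c))"
    and "\<forall>l\<in>{1..d}. m X l 0 (1 - c) > 0"
  shows "\<bar>deriv (deriv (z X i j)) y\<bar>
           \<le> 3 * (MAX l\<in>{1..d}. (m X l 2 (1 / (1 - c)))\<^sup>2 / (m X l 0 (1 - c)) ^ 4)"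
proof -
  note c0 = assms(1) and c1 = assms(2)
  define pd where "pd = (prod_decode :: nat \<Rightarrow> nat \<times> nat)"
  define a where "a n = real_of_ereal (Q X i n)" for n
  define b where "b n = real_of_ereal (Q X j n)" for n
  define W where "W k = (if \<bar>Q X i (fst (pd k))\<bar> = \<infinity> \<or> \<bar>Q X j (snd (pd k))\<bar> = \<infinity> then 0
      else exp (- (1/2) * ((a (fst (pd k)))\<^sup>2 + (b (snd (pd k)))\<^sup>2)))" for k
  define P where "P k = a (fst (pd k)) * b (snd (pd k))" for k
  define A where "A l n = m_term X l 2 (1 / (1 - c)) n" for l n
  define C where "C l n = m_term X l 0 (1 - c) n" for l n
  define K where "K = exp (1 / (2 * (1 - c)))"
  define E where "E l n = A l n + K * C l n" for l n
  define M where "M k = 6 * (E i (fst (pd k)) * E j (snd (pd k)))" for k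
  define T where "T x = (\<Sum>k. W k * exp (x * P k))" for x
  define T1 where "T1 x = (\<Sum>k. W k * P k * exp (x * P k))" for x
  define T2 where "T2 x = (\<Sum>k. W k * (P k)\<^sup>2 * exp (x * P k))" for x
  define S where "S = {-c<..<c}"
  have W0: "W k \<ge> 0" for k by (simp add: W_def)
  have A0: "A l n \<ge> 0" for l n by (simp add: A_def m_term_nonneg)
  have C0: "C l n \<ge> 0" for l n by (simp add: C_def m_term_nonneg)
  have E0: "E l n \<ge> 0" for l n using A0 C0 by (simp add: E_def K_def)
  have sA: "summable (A l)" if "l \<in> {1..d}" for l
    using assms(6) that by (simp add: A_def[abs_def])
  have sC: "summable (C l)" if "l \<in> {1..d}" for l
    using assms(7) that by (simp add: C_def[abs_def])
  have sE: "summable (E l)" if "l \<in> {1..d}" for l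
    unfolding E_def[abs_def] by (intro summable_add summable_mult sA sC that)
  have zt: "z_term X i j x (pd k) = W k * exp (x * P k)" for x k
  proof (cases "\<bar>Q X i (fst (pd k))\<bar> = \<infinity> \<or> \<bar>Q X j (snd (pd k))\<bar> = \<infinity>")
    case True thus ?thesis by (auto simp: z_term_def Let_def W_def)
  next
    case False
    hence "z_term X i j x (pd k) = exp (- (1/2) * ((a (fst (pd k)))\<^sup>2 + (b (snd (pd k)))\<^sup>2
        - 2 * x * a (fst (pd k)) * b (snd (pd k))))"
      by (simp add: z_term_def Let_def a_def b_def)
    also have "\<dots> = exp (- (1/2) * ((a (fst (pd k)))\<^sup>2 + (b (snd (pd k)))\<^sup>2)) * exp (x * P k)"
      by (simp add: exp_add[symmetric] P_def algebra_simps)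
    finally show ?thesis using False by (simp add: W_def)
  qed
  have Afin: "A l n = exp (- (real_of_ereal (Q X l n))\<^sup>2 / (2 * (1 / (1 - c)))) * \<bar>real_of_ereal (Q X l n)\<bar>\<^sup>2"
    if "\<bar>Q X l n\<bar> \<noteq> \<infinity>" for l n using that by (simp add: A_def m_term_eq)
  have Cfin: "C l n = exp (- (real_of_ereal (Q X l n))\<^sup>2 / (2 * (1 - c))) * \<bar>real_of_ereal (Q X l n)\<bar>^0"
    if "\<bar>Q X l n\<bar> \<noteq> \<infinity>" for l n using that by (simp add: C_def m_term_eq)
  have bnd: "W k * exp (x * P k) * (1 + \<bar>P k\<bar> + (P k)\<^sup>2) \<le> M k" if x: "\<bar>x\<bar> < c" for k x
  proof (cases "\<bar>Q X i (fst (pd k))\<bar> = \<infinity> \<or> \<bar>Q X j (snd (pd k))\<bar> = \<infinity>")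
    case True thus ?thesis using E0 by (auto simp: W_def M_def)
  next
    case False
    define n0 where "n0 = fst (pd k)"
    define n1 where "n1 = snd (pd k)"
    have f0: "\<bar>Q X i n0\<bar> \<noteq> \<infinity>" and f1: "\<bar>Q X j n1\<bar> \<noteq> \<infinity>" using False by (auto simp: n0_def n1_def)
    have Ei: "E i n0 = exp (- (a n0)\<^sup>2 / (2 * (1 / (1 - c)))) * \<bar>a n0\<bar>\<^sup>2 + exp (1 / (2 * (1 - c))) * (exp (- (a n0)\<^sup>2 / (2 * (1 - c))) * \<bar>a n0\<bar>^0)"
      using Afin[OF f0] Cfin[OF f0] by (simp add: E_def K_def a_def)
    have Ej: "E j n1 = exp (- (b n1)\<^sup>2 / (2 * (1 / (1 - c)))) * \<bar>b n1\<bar>\<^sup>2 + exp (1 / (2 * (1 - c))) * (exp (- (b n1)\<^sup>2 / (2 * (1 - c))) * \<bar>b n1\<bar>^0)"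
      using Afin[OF f1] Cfin[OF f1] by (simp add: E_def K_def b_def)
    have wk: "W k * exp (x * P k) = exp (- (1/2) * ((a n0)\<^sup>2 + (b n1)\<^sup>2 - 2 * x * a n0 * b n1))"
      using zt[of x k] False by (simp add: z_term_def Let_def a_def b_def n0_def n1_def)
    have "W k * exp (x * P k) * (1 + \<bar>a n0 * b n1\<bar> + (a n0 * b n1)\<^sup>2) \<le> 6 * E i n0 * E j n1"
      unfolding Ei Ej
    proof (rule pw_combine)
      show "0 \<le> W k * exp (x * P k)" using W0 by simp
      show "W k * exp (x * P k) \<le> exp (- (a n0)\<^sup>2 / (2 * (1 / (1 - c)))) * exp (- (b n1)\<^sup>2 / (2 * (1 / (1 - c))))"
        unfolding wk by (rule pw_upper[OF x c1])
    qed (use pw_E[OF c0 c1] in auto)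
    thus ?thesis by (simp add: M_def P_def n0_def n1_def mult.assoc)
  qed
  have sM: "summable M"
  proof -
    have "(\<lambda>k. E i (fst (pd k)) * E j (snd (pd k))) sums (suminf (E i) * suminf (E j))"
      unfolding pd_def by (rule prod_series[OF E0 E0 sE sE]) (use assms(4,5) in auto)
    thus ?thesis unfolding M_def by (intro summable_mult) (rule sums_summable)
  qed
  have SD: "summable (\<lambda>k. W k * exp (x * P k))"
    "summable (\<lambda>k. W k * P k * exp (x * P k))"
    "summable (\<lambda>k. W k * (P k)\<^sup>2 * exp (x * P k))"
    "(T has_field_derivative T1 x) (at x)"
    "(T1 has_field_derivative T2 x) (at x)" if "x \<in> S" for x
  proof -
    have x: "\<bar>x\<bar> < c" using that by (auto simp: S_def)
    show "summable (\<lambda>k. W k * exp (x * P k))"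
      by (rule series_derivs(1)[OF W0 sM], erule bnd, rule x)
    show "summable (\<lambda>k. W k * P k * exp (x * P k))"
      by (rule series_derivs(2)[OF W0 sM], erule bnd, rule x)
    show "summable (\<lambda>k. W k * (P k)\<^sup>2 * exp (x * P k))"
      by (rule series_derivs(3)[OF W0 sM], erule bnd, rule x)
    have sd4: "((\<lambda>x. \<Sum>k. W k * exp (x * P k)) has_field_derivative (\<Sum>k. W k * P k * exp (x * P k))) (at x)"
      by (rule series_derivs(4)[OF W0 sM], erule bnd, rule x)
    have sd5: "((\<lambda>x. \<Sum>k. W k * P k * exp (x * P k)) has_field_derivative (\<Sum>k. W k * (P k)\<^sup>2 * exp (x * P k))) (at x)"
      by (rule series_derivs(5)[OF W0 sM], erule bnd, rule x)
    show "(T has_field_derivative T1 x) (at x)" using sd4 unfolding T_def[abs_def] T1_def .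
    show "(T1 has_field_derivative T2 x) (at x)" using sd5 unfolding T1_def[abs_def] T2_def .
  qed
  define SCi where "SCi = suminf (C i)"
  define SCj where "SCj = suminf (C j)"
  define SAi where "SAi = suminf (A i)"
  define SAj where "SAj = suminf (A j)"
  have s2pi: "sqrt (2 * pi) > 0" by (simp add: pi_gt_zero)
  have SCi0: "SCi > 0"
  proof -
    have "m X i 0 (1 - c) > 0" using assms(8,4) by blast
    thus ?thesis using s2pi by (simp add: m_def SCi_def C_def[abs_def] zero_less_mult_iff zero_less_divide_iff)
  qed
  have SCj0: "SCj > 0"
  proof -
    have "m X j 0 (1 - c) > 0" using assms(8,5) by blast
    thus ?thesis using s2pi by (simp add: m_def SCj_def C_def[abs_def] zero_less_mult_iff zero_less_divide_iff)
  qed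
  have SAi0: "SAi \<ge> 0" unfolding SAi_def by (rule suminf_nonneg[OF sA[OF assms(4)] A0])
  have SAj0: "SAj \<ge> 0" unfolding SAj_def by (rule suminf_nonneg[OF sA[OF assms(5)] A0])
  have Tlow: "SCi * SCj \<le> T x" if xS: "x \<in> S" for x
  proof -
    have x: "\<bar>x\<bar> < c" using that by (auto simp: S_def)
    have sums: "(\<lambda>k. C i (fst (pd k)) * C j (snd (pd k))) sums (SCi * SCj)"
      unfolding pd_def SCi_def SCj_def by (rule prod_series[OF C0 C0 sC sC]) (use assms(4,5) in auto)
    have pw: "C i (fst (pd k)) * C j (snd (pd k)) \<le> W k * exp (x * P k)" for k
    proof (cases "\<bar>Q X i (fst (pd k))\<bar> = \<infinity> \<or> \<bar>Q X j (snd (pd k))\<bar> = \<infinity>")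
      case True thus ?thesis using W0[of k] by (auto simp: C_def m_term_eq)
    next
      case False
      have wk: "W k * exp (x * P k) = exp (- (1/2) * ((a (fst (pd k)))\<^sup>2 + (b (snd (pd k)))\<^sup>2 - 2 * x * a (fst (pd k)) * b (snd (pd k))))"
        using zt[of x k] False by (simp add: z_term_def Let_def a_def b_def)
      show ?thesis unfolding wk using False pw_lower[OF x c1 c0, of "a (fst (pd k))" "b (snd (pd k))"]
        by (simp add: C_def m_term_eq a_def b_def)
    qed
    have "SCi * SCj \<le> (\<Sum>k. W k * exp (x * P k))"
      by (rule sums_le[OF _ sums summable_sums[OF SD(1)[OF xS]]]) (use pw in auto)
    thus ?thesis by (simp add: T_def)
  qed
  have T2up: "T2 x \<le> SAi * SAj" if xS: "x \<in> S" for x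
  proof -
    have x: "\<bar>x\<bar> < c" using that by (auto simp: S_def)
    have sums: "(\<lambda>k. A i (fst (pd k)) * A j (snd (pd k))) sums (SAi * SAj)"
      unfolding pd_def SAi_def SAj_def by (rule prod_series[OF A0 A0 sA sA]) (use assms(4,5) in auto)
    have pw: "W k * (P k)\<^sup>2 * exp (x * P k) \<le> A i (fst (pd k)) * A j (snd (pd k))" for k
    proof (cases "\<bar>Q X i (fst (pd k))\<bar> = \<infinity> \<or> \<bar>Q X j (snd (pd k))\<bar> = \<infinity>")
      case True thus ?thesis using A0 by (auto simp: W_def intro!: mult_nonneg_nonneg)
    next
      case False
      have wk: "W k * exp (x * P k) = exp (- (1/2) * ((a (fst (pd k)))\<^sup>2 + (b (snd (pd k)))\<^sup>2 - 2 * x * a (fst (pd k)) * b (snd (pd k))))"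
        using zt[of x k] False by (simp add: z_term_def Let_def a_def b_def)
      have u: "W k * exp (x * P k) \<le> exp (- (a (fst (pd k)))\<^sup>2 / (2 * (1 / (1 - c)))) * exp (- (b (snd (pd k)))\<^sup>2 / (2 * (1 / (1 - c))))"
        unfolding wk by (rule pw_upper[OF x c1])
      have "W k * (P k)\<^sup>2 * exp (x * P k) = (P k)\<^sup>2 * (W k * exp (x * P k))" by simp
      also have "\<dots> \<le> (P k)\<^sup>2 * (exp (- (a (fst (pd k)))\<^sup>2 / (2 * (1 / (1 - c)))) * exp (- (b (snd (pd k)))\<^sup>2 / (2 * (1 / (1 - c)))))"
        by (rule mult_left_mono[OF u]) simp
      also have "\<dots> = A i (fst (pd k)) * A j (snd (pd k))"
        using False by (simp add: A_def m_term_eq a_def b_def P_def power_mult_distrib roe_abs_sq)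
      finally show ?thesis .
    qed
    have "(\<Sum>k. W k * (P k)\<^sup>2 * exp (x * P k)) \<le> SAi * SAj"
      by (rule sums_le[OF _ summable_sums[OF SD(3)[OF xS]] sums]) (use pw in auto)
    thus ?thesis by (simp add: T2_def)
  qed
  have Tpos: "T x > 0" if "x \<in> S" for x
    using Tlow[OF that] SCi0 SCj0 by (smt (verit) mult_pos_pos)
  have zT: "z X i j x = inverse (T x)" if xS: "x \<in> S" for x
  proof -
    have "infsum (z_term X i j x) UNIV = infsum (\<lambda>k. z_term X i j x (pd k)) UNIV"
      unfolding pd_def by (rule infsum_reindex_bij_betw[OF bij_prod_decode, symmetric])
    also have "\<dots> = infsum (\<lambda>k. W k * exp (x * P k)) UNIV" by (simp add: zt)
    also have "\<dots> = T x"
    proof -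
      have "(\<lambda>k. W k * exp (x * P k)) sums T x" unfolding T_def by (rule summable_sums[OF SD(1)[OF xS]])
      hence "((\<lambda>k. W k * exp (x * P k)) has_sum T x) UNIV"
        by (rule sums_nonneg_imp_has_sum) (use W0 in simp)
      thus ?thesis by (rule infsumI)
    qed
    finally show ?thesis by (simp add: z_def)
  qed
  have yS: "y \<in> S" using assms(3) by (auto simp: S_def)
  have oS: "open S" by (simp add: S_def)
  have dd: "deriv (deriv (z X i j)) y = - T2 y / (T y)\<^sup>2 + 2 * (T1 y)\<^sup>2 / (T y)^3"
    by (rule deriv2_inverse[OF oS yS Tpos SD(4) SD(5) zT])
  have CS: "(T1 y)\<^sup>2 \<le> T y * T2 y"
    unfolding T_def T1_def T2_def by (rule series_CS[OF summable_sums[OF SD(1)[OF yS]] summable_sums[OF SD(2)[OF yS]] summable_sums[OF SD(3)[OF yS]]])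
       (rule finite_CS_exp[OF W0])
  have Ty: "T y > 0" by (rule Tpos[OF yS])
  have T2y: "T2 y \<ge> 0" unfolding T2_def
    by (rule suminf_nonneg[OF SD(3)[OF yS]]) (use W0 in simp)
  have "\<bar>deriv (deriv (z X i j)) y\<bar> \<le> T2 y / (T y)\<^sup>2 + 2 * (T1 y)\<^sup>2 / (T y)^3"
    unfolding dd using Ty T2y by (simp add: abs_le_iff)
  also have "2 * (T1 y)\<^sup>2 / (T y)^3 \<le> 2 * (T y * T2 y) / (T y)^3"
    by (intro divide_right_mono mult_left_mono CS) (use Ty in auto)
  also have "2 * (T y * T2 y) / (T y)^3 = 2 * (T2 y / (T y)\<^sup>2)"
    using Ty by (simp add: field_simps power2_eq_square power3_eq_cube)
  also have "T2 y / (T y)\<^sup>2 + 2 * (T2 y / (T y)\<^sup>2) = 3 * (T2 y / (T y)\<^sup>2)" by simp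
  also have "T2 y / (T y)\<^sup>2 \<le> SAi * SAj / (SCi * SCj)\<^sup>2"
  proof (rule frac_le)
    show "0 \<le> SAi * SAj" using SAi0 SAj0 by simp
    show "T2 y \<le> SAi * SAj" by (rule T2up[OF yS])
    show "0 < (SCi * SCj)\<^sup>2" using SCi0 SCj0 by simp
    show "(SCi * SCj)\<^sup>2 \<le> (T y)\<^sup>2"
      by (rule power_mono[OF Tlow[OF yS]]) (use SCi0 SCj0 in simp)
  qed
  also have "3 * (SAi * SAj / (SCi * SCj)\<^sup>2) \<le> 3 * (MAX l\<in>{1..d}. (m X l 2 (1 / (1 - c)))\<^sup>2 / (m X l 0 (1 - c)) ^ 4)"
  proof (rule final_arith[OF SAi0 SAj0 SCi0 SCj0 refl])
    have "(m X l 2 (1 / (1 - c)))\<^sup>2 / (m X l 0 (1 - c)) ^ 4 \<le> (MAX l\<in>{1..d}. (m X l 2 (1 / (1 - c)))\<^sup>2 / (m X l 0 (1 - c)) ^ 4)"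
      if "l \<in> {1..d}" for l
      by (rule Max_ge) (use that in auto)
    thus "(1 / sqrt (2 * pi) * SAi)\<^sup>2 / (1 / sqrt (2 * pi) * SCi) ^ 4 \<le> (MAX l\<in>{1..d}. (m X l 2 (1 / (1 - c)))\<^sup>2 / (m X l 0 (1 - c)) ^ 4)"
      "(1 / sqrt (2 * pi) * SAj)\<^sup>2 / (1 / sqrt (2 * pi) * SCj) ^ 4 \<le> (MAX l\<in>{1..d}. (m X l 2 (1 / (1 - c)))\<^sup>2 / (m X l 0 (1 - c)) ^ 4)"
      using assms(4,5) by (auto simp: m_def SAi_def SAj_def SCi_def SCj_def A_def[abs_def] C_def[abs_def])
  qed
  finally show ?thesis by simp
qed


end
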